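(* Let $\mathbf c,\mathbf c_0\in\mathbb{R}^n$ and let $\mathbf P,\mathbf P_0\in\mathbb{R}^{n\times n}$ be symmetric positive definite. Let $\mathbf P_0=\mathbf L_0\mathbf L_0^\top$ be the Cholesky factorization, $\tilde{\mathbf c}=\mathbf L_0^\top(\mathbf c-\mathbf c_0)$, $\tilde{\mathbf P}=\mathbf L_0^{-1}\mathbf P\mathbf L_0^{-\top}$, and $\ell^*=\sup_{\beta\in\mathcal{I}_{\tilde{\mathbf P}}}\ell_{\tilde{\mathbf c},\tilde{\mathbf P}}(\beta)$. Then $$\mathcal{E}(\mathbf c,\mathbf P)\Subset\mathcal{E}\big(\mathbf c_0,(-\ell^* )^{-1}\mathbf P_0\big)$$ and $$\mathcal{E}(\mathbf d,-\ell^*\mathbf P)\Subset\mathcal{E}(\mathbf c_0,\mathbf P_0),\qquad\text{where } \mathbf d=(-\ell^* )^{-1/2}(\mathbf c-\mathbf c_0)+\mathbf c_0.$$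
   Context: $\mathcal{E}(\mathbf c,\mathbf P)=\{\mathbf x:(\mathbf x-\mathbf c)^\top\mathbf P(\mathbf x-\mathbf c)\le1\}$; $\mathcal{E}\Subset\mathcal{E}_0$ means $\mathcal{E}\subseteq\mathcal{E}_0$ and $\partial\mathcal{E}\cap\partial\mathcal{E}_0\neq\emptyset$. For symmetric positive definite $\mathbf Q$ and vector $\mathbf a$: let $\mathbf Q=\mathbf V\mathbf D\mathbf V^\top$ be a spectral decomposition ($\mathbf V$ orthogonal, $\mathbf D$ diagonal with entries $\lambda_i$), $\bar{\mathbf a}=\mathbf V^\top\mathbf a$, $S(\bar{\mathbf a})=\{i:\bar a_i\neq0\}$, $\lambda_{\min}(\mathbf Q)$ the smallest eigenvalue; $\mathcal{I}_{\mathbf Q}=(\lambda_{\min}(\mathbf Q)^{-1},\infty)$ if some $i\in S(\bar{\mathbf a})$ has $\lambda_i=\lambda_{\min}(\mathbf Q)$, and $[\lambda_{\min}(\mathbf Q)^{-1},\infty)$ otherwise; and $\ell_{\mathbf a,\mathbf Q}(\beta)=-\beta-\sum_{i\in S(\bar{\mathbf a})}\bar a_i^2\frac{\lambda_i\beta}{\lambda_i\beta-1}$ for $\beta\in\mathcal{I}_{\mathbf Q}$. *)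

theory Defs
  imports "HOL-Analysis.Analysis"
begin

definition ellipsoid :: "real^'n \<Rightarrow> real^'n^'n \<Rightarrow> (real^'n) set" where
  "ellipsoid c P = {x. (x - c) \<bullet> (P *v (x - c)) \<le> 1}"

definition inscribed :: "(real^'n) set \<Rightarrow> (real^'n) set \<Rightarrow> bool" where
  "inscribed E E0 \<longleftrightarrow> E \<subseteq> E0 \<and> frontier E \<inter> frontier E0 \<noteq> {}"

definition sym_posdef :: "real^'n^'n \<Rightarrow> bool" where
  "sym_posdef P \<longleftrightarrow> transpose P = P \<and> (\<forall>x. x \<noteq> 0 \<longrightarrow> x \<bullet> (P *v x) > 0)"

definition cholesky_factor :: "real^('n::{finite,linorder})^('n::{finite,linorder}) \<Rightarrow> real^('n::{finite,linorder})^('n::{finite,linorder}) \<Rightarrow> bool" where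
  "cholesky_factor L P \<longleftrightarrow> P = L ** transpose L \<and>
     (\<forall>i j. i < j \<longrightarrow> L $ i $ j = 0) \<and> (\<forall>i. L $ i $ i > 0)"

definition diag_mat :: "real^'n \<Rightarrow> real^'n^'n" where
  "diag_mat lam = (\<chi> i j. if i = j then lam $ i else 0)"

definition spectral_decomp :: "real^'n^'n \<Rightarrow> real^'n^'n \<Rightarrow> real^'n \<Rightarrow> bool" where
  "spectral_decomp Q V lam \<longleftrightarrow> orthogonal_matrix V \<and> Q = V ** diag_mat lam ** transpose V"

definition lambda_min :: "real^'n^'n \<Rightarrow> real" where
  "lambda_min Q = Min {l. \<exists>v. v \<noteq> 0 \<and> Q *v v = l *s v}"

definition supp_idx :: "real^'n^'n \<Rightarrow> real^'n \<Rightarrow> 'n set" where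
  "supp_idx V a = {i. (transpose V *v a) $ i \<noteq> 0}"

definition I_set :: "real^'n^'n \<Rightarrow> real^'n^'n \<Rightarrow> real^'n \<Rightarrow> real^'n \<Rightarrow> real set" where
  "I_set Q V lam a =
     (if \<exists>i\<in>supp_idx V a. lam $ i = lambda_min Q
      then {inverse (lambda_min Q)<..} else {inverse (lambda_min Q)..})"

definition ell :: "real^'n^'n \<Rightarrow> real^'n \<Rightarrow> real^'n \<Rightarrow> real \<Rightarrow> real" where
  "ell V lam a \<beta> = - \<beta> - (\<Sum>i\<in>supp_idx V a.
      ((transpose V *v a) $ i)\<^sup>2 * (lam $ i * \<beta> / (lam $ i * \<beta> - 1)))"

end

theory Submission
  imports Defs
begin


lemma term_bound:
  fixes k a z :: real
  assumes "k > 1"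
  shows "z^2 - k*(z-a)^2 \<le> a^2 * (k/(k-1))"
proof -
  have "a^2 * (k/(k-1)) - (z^2 - k*(z-a)^2) = ((k-1)*z - k*a)^2/(k-1)"
    using assms by (simp add: field_simps power2_eq_square)
  moreover have "((k-1)*z - k*a)^2/(k-1) \<ge> 0" using assms by simp
  ultimately show ?thesis by linarith
qed

lemma term_eq:
  fixes k a :: real
  assumes "k > 1"
  shows "(a*k/(k-1))^2 - k*(a*k/(k-1)-a)^2 = a^2 * (k/(k-1))"
proof -
  have ne: "k - 1 \<noteq> 0" using assms by simp
  have "a*k/(k-1)-a = a/(k-1)" using ne by (simp add: field_simps)
  then have "(a*k/(k-1))^2 - k*(a*k/(k-1)-a)^2 = (a*k)^2/(k-1)^2 - k*a^2/(k-1)^2"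
    by (simp add: power_divide)
  also have "\<dots> = (a^2*k*(k-1))/(k-1)^2"
    unfolding diff_divide_distrib[symmetric] by (simp add: algebra_simps power2_eq_square)
  also have "\<dots> = (a^2*k)*(k-1)/((a^2*0+(k-1))*(k-1))" by (simp add: power2_eq_square)
  also have "\<dots> = a^2 * (k/(k-1))" using ne by simp
  finally show ?thesis .
qed

lemma weak_dual:
  fixes lam a z :: "real^'n"
  assumes pos: "\<forall>i. lam$i > 0" and lm: "lm = Min (range (\<lambda>i. lam$i))"
    and S: "S = {i. a$i \<noteq> 0}"
    and I: "I = (if \<exists>i\<in>S. lam$i = lm then {inverse lm<..} else {inverse lm..})"
    and b: "\<beta> \<in> I"
    and feas: "(\<Sum>i\<in>UNIV. lam$i*(z$i-a$i)^2) \<le> 1"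
  shows "(\<Sum>i\<in>UNIV. (z$i)^2) \<le> \<beta> + (\<Sum>i\<in>S. (a$i)^2 * (lam$i*\<beta>/(lam$i*\<beta>-1)))"
proof -
  have lmle: "lm \<le> lam$i" for i using lm by simp
  have lmpos: "lm > 0" using lm pos by (simp add: Min_gr_iff)
  have bge: "\<beta> \<ge> inverse lm" using b I by (auto split: if_splits)
  have ge1: "lam$i*\<beta> \<ge> 1" for i
  proof -
    have "lam$i*\<beta> \<ge> lam$i * inverse lm" using bge pos[rule_format, of i] by simp
    moreover have "lam$i * inverse lm \<ge> 1" using lmle[of i] lmpos by (simp add: field_simps)
    ultimately show ?thesis by linarith
  qed
  have gt1: "lam$i*\<beta> > 1" if "i\<in>S" for i
  proof (cases "lam$i = lm")
    case True
    then have "\<beta> > inverse lm" using b I that by (auto split: if_splits)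
    then show ?thesis using True lmpos by (simp add: field_simps)
  next
    case False
    then have "lam$i > lm" using lmle[of i] by simp
    then have "lam$i * inverse lm > 1" using lmpos by (simp add: field_simps)
    moreover have "lam$i*\<beta> \<ge> lam$i * inverse lm" using bge pos[rule_format, of i] by simp
    ultimately show ?thesis by linarith
  qed
  have bpos: "\<beta> > 0" using bge lmpos by (meson inverse_positive_iff_positive less_le_trans)
  have tb: "(z$i)^2 - (lam$i*\<beta>)*(z$i-a$i)^2 \<le> (if i\<in>S then (a$i)^2 * (lam$i*\<beta>/(lam$i*\<beta>-1)) else 0)" for i
  proof (cases "i\<in>S")
    case True then show ?thesis using term_bound[OF gt1[OF True]] by simp
  next
    case False
    then have "a$i = 0" using S by simp
    then have "(z$i)^2 - (lam$i*\<beta>)*(z$i-a$i)^2 = (z$i)^2 * (1 - lam$i*\<beta>)" by (simp add: algebra_simps)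
    also have "\<dots> \<le> 0" using ge1[of i] by (simp add: mult_nonneg_nonpos)
    finally show ?thesis using False by simp
  qed
  have "(\<Sum>i\<in>UNIV. (z$i)^2) \<le> (\<Sum>i\<in>UNIV. (z$i)^2) + \<beta> * (1 - (\<Sum>i\<in>UNIV. lam$i*(z$i-a$i)^2))"
    using feas bpos by simp
  also have "\<dots> = \<beta> + (\<Sum>i\<in>UNIV. (z$i)^2 - (lam$i*\<beta>)*(z$i-a$i)^2)"
    by (simp add: algebra_simps sum_subtractf sum_distrib_left)
  also have "\<dots> \<le> \<beta> + (\<Sum>i\<in>UNIV. (if i\<in>S then (a$i)^2 * (lam$i*\<beta>/(lam$i*\<beta>-1)) else 0))"
    using tb by (simp add: sum_mono)
  also have "\<dots> = \<beta> + (\<Sum>i\<in>S. (a$i)^2 * (lam$i*\<beta>/(lam$i*\<beta>-1)))"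
    by (simp add: sum.If_cases)
  finally show ?thesis .
qed

lemma h_large:
  fixes lam a :: "real^'n" and S :: "'n set"
  assumes pos: "\<forall>i. lam$i > 0" and lmpos: "lm > 0" and lmle: "\<forall>i. lm \<le> lam$i"
  defines "A \<equiv> (\<Sum>i\<in>S. (a$i)^2 * lam$i)"
  shows "(\<Sum>i\<in>S. (a$i)^2 * lam$i / (lam$i * ((sqrt A + 2)/lm) - 1)^2) < 1"
proof -
  let ?b = "(sqrt A + 2)/lm"
  have A0: "A \<ge> 0" unfolding A_def using pos by (simp add: sum_nonneg less_imp_le)
  have r: "sqrt A + 1 \<le> lam$i * ?b - 1" for i
  proof -
    have "lam$i * ?b \<ge> lm * ?b" using lmle pos A0 lmpos by (intro mult_right_mono) (auto)
    also have "lm * ?b = sqrt A + 2" using lmpos by simp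
    finally show ?thesis by simp
  qed
  have "(\<Sum>i\<in>S. (a$i)^2 * lam$i / (lam$i * ?b - 1)^2) \<le> (\<Sum>i\<in>S. (a$i)^2 * lam$i / (sqrt A + 1)^2)"
  proof (rule sum_mono)
    fix i
    have le: "(sqrt A + 1)^2 \<le> (lam$i * ?b - 1)^2" using r[of i] A0 by (intro power_mono) auto
    have p1: "(sqrt A + 1)^2 > 0" using A0 by (intro zero_less_power) (simp add: add_nonneg_pos)
    have p2: "(lam$i * ?b - 1)^2 > 0" using p1 le by linarith
    have nn: "(a$i)^2 * lam$i \<ge> 0" using pos by (simp add: less_imp_le)
    show "(a$i)^2 * lam$i / (lam$i * ?b - 1)^2 \<le> (a$i)^2 * lam$i / (sqrt A + 1)^2"
      by (rule divide_left_mono[OF le nn mult_pos_pos[OF p2 p1]])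
  qed
  also have "\<dots> = A / (sqrt A + 1)^2" unfolding A_def by (simp add: sum_divide_distrib[symmetric])
  also have "\<dots> < 1"
  proof -
    have "A = (sqrt A)^2" using A0 by simp
    also have "\<dots> < (sqrt A + 1)^2" using A0 by (intro power_strict_mono) auto
    finally show ?thesis using A0 by (simp add: divide_less_eq add_nonneg_pos)
  qed
  finally show ?thesis .
qed

lemma eq_from:
  fixes lam a z :: "real^'n"
  assumes S: "S = {i. a$i \<noteq> 0}"
    and gt1: "\<forall>i\<in>S. lam$i*\<beta> > 1"
    and zS: "\<forall>i\<in>S. z$i = a$i*(lam$i*\<beta>)/(lam$i*\<beta>-1)"
    and zn: "\<forall>i. i \<notin> S \<longrightarrow> z$i = 0 \<or> lam$i*\<beta> = 1"
    and c: "(\<Sum>i\<in>UNIV. lam$i*(z$i-a$i)^2) = 1"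
  shows "(\<Sum>i\<in>UNIV. (z$i)^2) = \<beta> + (\<Sum>i\<in>S. (a$i)^2 * (lam$i*\<beta>/(lam$i*\<beta>-1)))"
proof -
  have te: "(z$i)^2 - (lam$i*\<beta>)*(z$i-a$i)^2 = (if i\<in>S then (a$i)^2 * (lam$i*\<beta>/(lam$i*\<beta>-1)) else 0)" for i
  proof (cases "i\<in>S")
    case True then show ?thesis using term_eq[OF gt1[rule_format, OF True], of "a$i"] zS True by simp
  next
    case False
    then have "a$i = 0" using S by simp
    then show ?thesis using False zn by auto
  qed
  have "(\<Sum>i\<in>UNIV. (z$i)^2) = (\<Sum>i\<in>UNIV. (z$i)^2) + \<beta> * (1 - (\<Sum>i\<in>UNIV. lam$i*(z$i-a$i)^2))"
    using c by simp
  also have "\<dots> = \<beta> + (\<Sum>i\<in>UNIV. (z$i)^2 - (lam$i*\<beta>)*(z$i-a$i)^2)"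
    by (simp add: algebra_simps sum_subtractf sum_distrib_left)
  also have "\<dots> = \<beta> + (\<Sum>i\<in>S. (a$i)^2 * (lam$i*\<beta>/(lam$i*\<beta>-1)))"
    unfolding te by (simp add: sum.If_cases)
  finally show ?thesis .
qed

lemma constr_eval:
  fixes lam a z :: "real^'n"
  assumes gt1: "\<forall>i\<in>S. lam$i*\<beta> > 1"
    and zS: "\<forall>i\<in>S. z$i = a$i*(lam$i*\<beta>)/(lam$i*\<beta>-1)"
    and S: "S = {i. a$i \<noteq> 0}"
  shows "(\<Sum>i\<in>UNIV. lam$i*(z$i-a$i)^2) = (\<Sum>i\<in>S. (a$i)^2 * lam$i / (lam$i*\<beta>-1)^2)
           + (\<Sum>i\<in>UNIV. if i \<in> S then 0 else lam$i*(z$i)^2)"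
proof -
  have t: "lam$i*(z$i-a$i)^2 = (if i\<in>S then (a$i)^2 * lam$i / (lam$i*\<beta>-1)^2 else 0)
          + (if i \<in> S then 0 else lam$i*(z$i)^2)" for i
  proof (cases "i\<in>S")
    case True
    have ne: "lam$i*\<beta>-1 \<noteq> 0" using gt1 True by force
    have "z$i - a$i = a$i/(lam$i*\<beta>-1)" using zS True ne by (simp add: field_simps)
    then show ?thesis using True by (simp add: power_divide)
  next
    case False then show ?thesis using S by simp
  qed
  show ?thesis unfolding t sum.distrib by (simp add: sum.If_cases)
qed

lemma strong_dual:
  fixes lam a :: "real^'n"
  assumes pos: "\<forall>i. lam$i > 0" and lm: "lm = Min (range (\<lambda>i. lam$i))"
    and S: "S = {i. a$i \<noteq> 0}"
    and I: "I = (if \<exists>i\<in>S. lam$i = lm then {inverse lm<..} else {inverse lm..})"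
  shows "\<exists>\<beta>\<in>I. \<exists>z. (\<Sum>i\<in>UNIV. lam$i*(z$i-a$i)^2) = 1 \<and>
            (\<Sum>i\<in>UNIV. (z$i)^2) = \<beta> + (\<Sum>i\<in>S. (a$i)^2 * (lam$i*\<beta>/(lam$i*\<beta>-1)))"
proof -
  have lmle: "lm \<le> lam$i" for i using lm by simp
  have lmpos: "lm > 0" using lm pos by (simp add: Min_gr_iff)
  have "lm \<in> range (\<lambda>i. lam$i)" unfolding lm by (rule Min_in) auto
  then obtain j where lamj: "lam$j = lm" by auto
  define h where "h = (\<lambda>\<beta>. \<Sum>i\<in>S. (a$i)^2*lam$i/(lam$i*\<beta>-1)^2)"
  define \<beta>0 where "\<beta>0 = inverse lm"
  have ge1: "lam$i*\<beta> \<ge> lam$i*\<beta>0" if "\<beta> \<ge> \<beta>0" for i \<beta>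
    using that pos[rule_format, of i] by simp
  have b0: "lam$i*\<beta>0 \<ge> 1" for i using lmle[of i] lmpos by (simp add: \<beta>0_def field_simps)
  have b0s: "lam$i*\<beta>0 > 1" if "lam$i \<noteq> lm" for i
    using lmle[of i] that lmpos by (simp add: \<beta>0_def field_simps)
  have gt1: "lam$i*\<beta> > 1" if "\<beta> > \<beta>0" for i \<beta>
  proof -
    have "lam$i*\<beta> > lam$i*\<beta>0" using that pos[rule_format, of i] by simp
    then show ?thesis using b0[of i] by linarith
  qed
  have hnn: "(a$i)^2*lam$i/(lam$i*\<beta>-1)^2 \<ge> 0" for i \<beta> using pos[rule_format, of i] by simp
  have key: "\<exists>\<beta>\<in>I. (\<forall>i\<in>S. lam$i*\<beta>>1) \<and> h \<beta> \<le> 1 \<and> (h \<beta> = 1 \<or> (\<beta> = \<beta>0 \<and> j \<notin> S))"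
  proof (cases "(\<forall>i\<in>S. lam$i \<noteq> lm) \<and> h \<beta>0 \<le> 1")
    case True
    have "\<beta>0 \<in> I" using True I by (auto simp: \<beta>0_def)
    moreover have "\<forall>i\<in>S. lam$i*\<beta>0>1" using True b0s by auto
    moreover have "j \<notin> S" using True lamj by auto
    ultimately show ?thesis using True by blast
  next
    case False
    define A where "A = (\<Sum>i\<in>S. (a$i)^2 * lam$i)"
    define \<beta>2 where "\<beta>2 = (sqrt A + 2)/lm"
    have A0: "A \<ge> 0" unfolding A_def using pos by (simp add: sum_nonneg less_imp_le)
    have h2: "h \<beta>2 < 1" unfolding h_def \<beta>2_def A_def
      using h_large[where lam=lam and lm=lm and S=S and a=a] pos lmpos lmle by (simp add: mult.assoc)
    have "\<exists>\<beta>1. \<beta>0 \<le> \<beta>1 \<and> \<beta>1 \<le> \<beta>2 \<and> h \<beta>1 \<ge> 1 \<and> (\<forall>\<beta>\<ge>\<beta>1. \<beta> \<in> I \<and> (\<forall>i\<in>S. lam$i*\<beta>>1))"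
    proof (cases "\<exists>i\<in>S. lam$i = lm")
      case True
      then obtain i0 where i0: "i0 \<in> S" "lam$i0 = lm" by auto
      define \<delta> where "\<delta> = min (\<bar>a$i0\<bar> * sqrt lm) 1"
      have ai0: "a$i0 \<noteq> 0" using i0 S by simp
      have dpos: "\<delta> > 0" using ai0 lmpos by (simp add: \<delta>_def)
      define \<beta>1 where "\<beta>1 = (1+\<delta>)/lm"
      have b01: "\<beta>0 < \<beta>1" using dpos lmpos by (simp add: \<beta>0_def \<beta>1_def field_simps)
      have b12: "\<beta>1 \<le> \<beta>2" using lmpos A0 unfolding \<beta>1_def \<beta>2_def \<delta>_def
        by (intro divide_right_mono) (auto simp: min_def add_increasing2)
      have "lam$i0*\<beta>1 - 1 = \<delta>" using i0 lmpos by (simp add: \<beta>1_def)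
      then have "(a$i0)^2*lam$i0/(lam$i0*\<beta>1-1)^2 = (a$i0)^2*lm/\<delta>^2" using i0 by simp
      also have "\<dots> \<ge> 1"
      proof -
        have "\<delta>^2 \<le> (\<bar>a$i0\<bar> * sqrt lm)^2" using dpos unfolding \<delta>_def
          by (intro power_mono) auto
        also have "\<dots> = (a$i0)^2*lm" using lmpos by (simp add: power_mult_distrib)
        finally show ?thesis using dpos by simp
      qed
      finally have "1 \<le> (a$i0)^2*lam$i0/(lam$i0*\<beta>1-1)^2" .
      also have "\<dots> \<le> h \<beta>1" unfolding h_def
        by (rule member_le_sum) (use i0 hnn S in auto)
      finally have "h \<beta>1 \<ge> 1" .
      moreover have "\<forall>\<beta>\<ge>\<beta>1. \<beta> \<in> I \<and> (\<forall>i\<in>S. lam$i*\<beta>>1)"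
        using True I b01 gt1 by (auto simp: \<beta>0_def)
      ultimately show ?thesis using b01 b12 by (intro exI[of _ \<beta>1]) auto
    next
      case F2: False
      then have "h \<beta>0 > 1" using False by auto
      moreover have "\<beta>0 \<le> \<beta>2" using lmpos A0 unfolding \<beta>0_def \<beta>2_def
        by (simp add: divide_inverse)
      moreover have "\<forall>\<beta>\<ge>\<beta>0. \<beta> \<in> I \<and> (\<forall>i\<in>S. lam$i*\<beta>>1)"
      proof (intro allI impI conjI ballI)
        fix \<beta> assume "\<beta> \<ge> \<beta>0" then show "\<beta> \<in> I" using F2 I by (auto simp: \<beta>0_def)
      next
        fix \<beta> i assume "\<beta> \<ge> \<beta>0" "i \<in> S"
        then show "lam$i*\<beta>>1" using ge1[of \<beta> i] b0s[of i] F2 by force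
      qed
      ultimately show ?thesis by (intro exI[of _ \<beta>0]) auto
    qed
    then obtain \<beta>1 where b1: "\<beta>0 \<le> \<beta>1" "\<beta>1 \<le> \<beta>2" "h \<beta>1 \<ge> 1"
      and b1I: "\<forall>\<beta>\<ge>\<beta>1. \<beta> \<in> I \<and> (\<forall>i\<in>S. lam$i*\<beta>>1)" by blast
    have "continuous_on {\<beta>1..\<beta>2} h"
    proof -
      have "\<forall>x\<in>{\<beta>1..\<beta>2}. \<forall>i\<in>S. (lam$i*x-1)^2 \<noteq> 0" using b1I by fastforce
      then show ?thesis unfolding h_def by (auto intro!: continuous_intros)
    qed
    then obtain \<beta> where bb: "\<beta>1 \<le> \<beta>" "\<beta> \<le> \<beta>2" "h \<beta> = 1"
      using IVT2'[of h \<beta>2 1 \<beta>1] h2 b1 by auto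
    then have "\<beta> \<in> I" "\<forall>i\<in>S. lam$i*\<beta>>1" using b1I by auto
    then show ?thesis using bb by auto
  qed
  then obtain \<beta> where bI: "\<beta> \<in> I" and bS: "\<forall>i\<in>S. lam$i*\<beta>>1" and hb: "h \<beta> \<le> 1"
    and alt: "h \<beta> = 1 \<or> (\<beta> = \<beta>0 \<and> j \<notin> S)" by blast
  define t where "t = sqrt ((1 - h \<beta>)/lm)"
  define z :: "real^'n" where "z = (\<chi> i. if i\<in>S then a$i*(lam$i*\<beta>)/(lam$i*\<beta>-1) else if i = j then t else 0)"
  have lt: "lm * t^2 = 1 - h \<beta>" using hb lmpos by (simp add: t_def)
  have zS: "\<forall>i\<in>S. z$i = a$i*(lam$i*\<beta>)/(lam$i*\<beta>-1)" by (simp add: z_def)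
  have t0: "t = 0" if "h \<beta> = 1" using that by (simp add: t_def)
  have sec: "(if i \<in> S then 0 else lam$i*(z$i)^2) = (if i = j then (if j \<notin> S then lm*t^2 else 0) else 0)" for i
    by (auto simp: z_def lamj)
  have c: "(\<Sum>i\<in>UNIV. lam$i*(z$i-a$i)^2) = 1"
  proof -
    have "(\<Sum>i\<in>UNIV. lam$i*(z$i-a$i)^2) = h \<beta> + (if j \<notin> S then lm*t^2 else 0)"
      unfolding constr_eval[OF bS zS S] h_def sec by simp
    also have "\<dots> = 1" using lt alt t0 by auto
    finally show ?thesis .
  qed
  have zn: "\<forall>i. i \<notin> S \<longrightarrow> z$i = 0 \<or> lam$i*\<beta> = 1"
  proof (intro allI impI)
    fix i assume "i \<notin> S"
    show "z$i = 0 \<or> lam$i*\<beta> = 1"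
    proof (cases "i = j")
      case True
      then show ?thesis using alt t0 \<open>i \<notin> S\<close> lamj lmpos by (auto simp: z_def \<beta>0_def)
    next
      case False then show ?thesis using \<open>i \<notin> S\<close> by (simp add: z_def)
    qed
  qed
  show ?thesis using eq_from[OF S bS zS zn c] c bI by blast
qed


lemma I_props:
  fixes lam :: "real^'n"
  assumes pos: "\<forall>i. lam$i > 0" and lm: "lm = Min (range (\<lambda>i. lam$i))"
    and I: "I = (if \<exists>i\<in>S. lam$i = lm then {inverse lm<..} else {inverse lm..})"
    and b: "\<beta> \<in> I"
  shows "\<beta> \<ge> inverse lm" "lm > 0" "\<forall>i\<in>S. lam$i*\<beta> > 1"
proof -
  have lmle: "lm \<le> lam$i" for i using lm by simp
  show lmpos: "lm > 0" using lm pos by (simp add: Min_gr_iff)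
  show bge: "\<beta> \<ge> inverse lm" using b I by (auto split: if_splits)
  show "\<forall>i\<in>S. lam$i*\<beta> > 1"
  proof
    fix i assume that: "i \<in> S"
    show "lam$i*\<beta> > 1"
    proof (cases "lam$i = lm")
      case True
      then have "\<beta> > inverse lm" using b I that by (auto split: if_splits)
      then show ?thesis using True lmpos by (simp add: field_simps)
    next
      case False
      then have "lam$i > lm" using lmle[of i] by simp
      then have "lam$i * inverse lm > 1" using lmpos by (simp add: field_simps)
      moreover have "lam$i*\<beta> \<ge> lam$i * inverse lm" using bge pos[rule_format, of i] by simp
      ultimately show ?thesis by linarith
    qed
  qed
qed


lemma inner_transpose: "(x::real^'n) \<bullet> (A *v y) = (transpose A *v x) \<bullet> y"
  by (simp add: dot_lmul_matrix)

lemma diag_mult: "diag_mat lam *v w = (\<chi> i. lam$i * w$i)"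
proof -
  have "(\<Sum>j\<in>UNIV. (if i = j then lam$i else 0) * w$j) = lam$i * w$i" for i
  proof -
    have "(\<Sum>j\<in>UNIV. (if i = j then lam$i else 0) * w$j) = (\<Sum>j\<in>UNIV. if i = j then lam$i * w$j else 0)"
      by (rule sum.cong) auto
    then show ?thesis by simp
  qed
  then show ?thesis by (simp add: diag_mat_def matrix_vector_mult_def vec_eq_iff)
qed

lemma diag_quad: "w \<bullet> (diag_mat lam *v w) = (\<Sum>i\<in>UNIV. lam$i * (w$i)^2)"
  by (simp add: diag_mult inner_vec_def power2_eq_square algebra_simps)

lemma quad_scale: "((t::real) *\<^sub>R (v::real^'n)) \<bullet> ((P::real^'n^'n) *v (t *\<^sub>R v)) = t^2 * (v \<bullet> (P *v v))"
  by (simp only: matrix_vector_mult_scaleR inner_scaleR_left inner_scaleR_right) (simp add: power2_eq_square)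

lemma frontier_pt:
  fixes x c :: "real^'n"
  assumes q: "(x-c) \<bullet> (P *v (x-c)) = 1"
  shows "x \<in> frontier (ellipsoid c P)"
proof -
  have xin: "x \<in> ellipsoid c P" using q by (simp add: ellipsoid_def)
  have "x \<notin> interior (ellipsoid c P)"
  proof
    assume "x \<in> interior (ellipsoid c P)"
    then obtain e where e: "e > 0" "ball x e \<subseteq> ellipsoid c P" using mem_interior by blast
    have v0: "x - c \<noteq> 0" using q by auto
    define d where "d = e / (2 * norm (x - c))"
    have dpos: "d > 0" using e v0 by (simp add: d_def)
    define y where "y = x + d *\<^sub>R (x - c)"
    have "dist x y = d * norm (x - c)" by (simp add: y_def dist_norm dpos abs_of_pos)
    also have "\<dots> = e/2" using v0 by (simp add: d_def)
    finally have "y \<in> ball x e" using e by simp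
    then have "y \<in> ellipsoid c P" using e by blast
    moreover have "y - c = (1 + d) *\<^sub>R (x - c)" by (simp add: y_def algebra_simps)
    then have "(y-c) \<bullet> (P *v (y-c)) = (1+d)^2" using q by (simp only: quad_scale)
    moreover have "(1+d)^2 > (1::real)" using dpos by (simp add: power2_eq_square algebra_simps add_pos_pos)
    ultimately show False by (simp add: ellipsoid_def)
  qed
  then show ?thesis using xin closure_subset by (auto simp: frontier_def)
qed

lemma posdef_invertible:
  fixes P0 :: "real^'n^'n"
  assumes "sym_posdef P0"
  shows "invertible P0"
proof -
  have "inj ((*v) P0)"
  proof (rule injI)
    fix x y assume "P0 *v x = P0 *v y"
    then have "P0 *v (x - y) = 0" by (simp add: matrix_vector_mult_diff_distrib)
    then show "x = y" using assms unfolding sym_posdef_def by (metis inner_zero_right less_irrefl right_minus_eq)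
  qed
  then show ?thesis using matrix_left_invertible_injective invertible_left_inverse by blast
qed

lemma L_inv:
  fixes P0 L :: "real^'n^'n"
  assumes "sym_posdef P0" "P0 = L ** transpose L"
  shows "L ** matrix_inv L = mat 1 \<and> matrix_inv L ** L = mat 1"
proof -
  obtain B where "P0 ** B = mat 1" using posdef_invertible[OF assms(1)] invertible_def by blast
  then have "L ** (transpose L ** B) = mat 1" using assms(2) by (simp add: matrix_mul_assoc)
  then have "invertible L" using invertible_right_inverse by blast
  then have "\<exists>A'. L ** A' = mat 1 \<and> A' ** L = mat 1" unfolding invertible_def by blast
  then show ?thesis unfolding matrix_inv_def by (rule someI_ex)
qed

lemma quadP:
  fixes M P V :: "real^'n^'n"
  assumes Pt: "M ** P ** transpose M = V ** diag_mat lam ** transpose V"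
  shows "(transpose M *v w) \<bullet> (P *v (transpose M *v w)) = (\<Sum>i\<in>UNIV. lam$i * ((transpose V *v w)$i)^2)"
proof -
  have "(transpose M *v w) \<bullet> (P *v (transpose M *v w)) = w \<bullet> (M *v (P *v (transpose M *v w)))"
    using inner_transpose[of w M] by simp
  also have "\<dots> = w \<bullet> ((M ** P ** transpose M) *v w)" by (simp only: matrix_vector_mul_assoc matrix_mul_assoc)
  also have "\<dots> = w \<bullet> (V *v (diag_mat lam *v (transpose V *v w)))" unfolding Pt by (simp only: matrix_vector_mul_assoc matrix_mul_assoc)
  also have "\<dots> = (transpose V *v w) \<bullet> (diag_mat lam *v (transpose V *v w))" by (rule inner_transpose)
  also have "\<dots> = (\<Sum>i\<in>UNIV. lam$i * ((transpose V *v w)$i)^2)" by (rule diag_quad)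
  finally show ?thesis .
qed

lemma quadP0:
  fixes L V :: "real^'n^'n"
  assumes V: "orthogonal_matrix V"
  shows "x \<bullet> ((L ** transpose L) *v x) = (\<Sum>i\<in>UNIV. ((transpose V *v (transpose L *v x))$i)^2)"
proof -
  let ?y = "transpose L *v x"
  have "x \<bullet> ((L ** transpose L) *v x) = x \<bullet> (L *v ?y)" by (simp add: matrix_vector_mul_assoc del: transpose_matrix_vector)
  also have "\<dots> = ?y \<bullet> ?y" by (rule inner_transpose)
  also have "\<dots> = ?y \<bullet> (V *v (transpose V *v ?y))"
  proof -
    have VVt: "V ** transpose V = mat 1" using V orthogonal_matrix_def by blast
    have vv: "V *v (transpose V *v z) = z" for z by (simp only: matrix_vector_mul_assoc VVt matrix_vector_mul_lid)
    show ?thesis by (simp only: vv)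
  qed
  also have "\<dots> = (transpose V *v ?y) \<bullet> (transpose V *v ?y)" by (rule inner_transpose)
  also have "\<dots> = (\<Sum>i\<in>UNIV. ((transpose V *v ?y)$i)^2)" by (simp add: inner_vec_def power2_eq_square)
  finally show ?thesis .
qed

lemma eig:
  fixes V :: "real^'n^'n"
  assumes V: "orthogonal_matrix V"
  shows "{l. \<exists>v. v \<noteq> 0 \<and> (V ** diag_mat lam ** transpose V) *v v = l *s v} = range (\<lambda>i. lam$i)"
proof
  have VtV: "transpose V ** V = mat 1" and VVt: "V ** transpose V = mat 1" using V by (auto simp: orthogonal_matrix_def)
  show "{l. \<exists>v. v \<noteq> 0 \<and> (V ** diag_mat lam ** transpose V) *v v = l *s v} \<subseteq> range (\<lambda>i. lam$i)"
  proof
    fix l assume "l \<in> {l. \<exists>v. v \<noteq> 0 \<and> (V ** diag_mat lam ** transpose V) *v v = l *s v}"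
    then obtain v where v: "v \<noteq> 0" "(V ** diag_mat lam ** transpose V) *v v = l *s v" by auto
    define w where "w = transpose V *v v"
    have vw: "v = V *v w" using VVt by (simp add: w_def matrix_vector_mul_assoc del: transpose_matrix_vector)
    have "w \<noteq> 0" using v(1) vw by auto
    then obtain i where wi: "w$i \<noteq> 0" by (auto simp: vec_eq_iff)
    have e1: "(V ** diag_mat lam ** transpose V) *v v = V *v (diag_mat lam *v w)"
      unfolding w_def by (simp only: matrix_vector_mul_assoc matrix_mul_assoc)
    have e2: "l *s v = V *v (l *s w)"
      by (subst vw) (simp only: scalar_mult_eq_scaleR matrix_vector_mult_scaleR)
    have "V *v (diag_mat lam *v w) = V *v (l *s w)"
      using v(2) e1 e2 by simp
    then have "transpose V *v (V *v (diag_mat lam *v w)) = transpose V *v (V *v (l *s w))" by simp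
    then have "diag_mat lam *v w = l *s w" using VtV by (simp add: matrix_vector_mul_assoc matrix_mul_assoc del: transpose_matrix_vector)
    then have "lam$i * w$i = l * w$i" by (simp add: diag_mult vec_eq_iff)
    then have "l = lam$i" using wi by simp
    then show "l \<in> range (\<lambda>i. lam$i)" by simp
  qed
next
  have VtV: "transpose V ** V = mat 1" using V by (auto simp: orthogonal_matrix_def)
  show "range (\<lambda>i. lam$i) \<subseteq> {l. \<exists>v. v \<noteq> 0 \<and> (V ** diag_mat lam ** transpose V) *v v = l *s v}"
  proof clarify
    fix i
    let ?e = "axis i (1::real) :: real^'n"
    let ?v = "V *v ?e"
    have tv: "transpose V *v ?v = ?e" using VtV by (simp add: matrix_vector_mul_assoc del: transpose_matrix_vector)
    have "?v \<noteq> 0" 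
    proof
      assume "?v = 0"
      then have "?e = 0" using tv by simp
      then show False by (simp add: axis_eq_0_iff)
    qed
    moreover have "diag_mat lam *v ?e = lam$i *s ?e" by (simp add: diag_mult vec_eq_iff axis_def)
    then have "(V ** diag_mat lam ** transpose V) *v ?v = lam$i *s ?v"
      by (simp only: matrix_vector_mul_assoc[symmetric] tv scalar_mult_eq_scaleR matrix_vector_mult_scaleR)
    ultimately show "\<exists>v. v \<noteq> 0 \<and> (V ** diag_mat lam ** transpose V) *v v = lam$i *s v" by blast
  qed
qed


theorem corollary2:
  fixes c c0 :: "real^('n::{finite,linorder})"
    and P P0 L0 V :: "real^('n::{finite,linorder})^('n::{finite,linorder})"
    and lam :: "real^('n::{finite,linorder})"
  assumes "sym_posdef P" and "sym_posdef P0"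
    and "cholesky_factor L0 P0"
    and "spectral_decomp (matrix_inv L0 ** P ** transpose (matrix_inv L0)) V lam"
  shows "let ct = transpose L0 *v (c - c0);
             Pt = matrix_inv L0 ** P ** transpose (matrix_inv L0);
             lstar = Sup (ell V lam ct ` I_set Pt V lam ct);
             d = (- lstar) powr (-1/2) *\<^sub>R (c - c0) + c0
         in inscribed (ellipsoid c P) (ellipsoid c0 (inverse (- lstar) *\<^sub>R P0))
          \<and> inscribed (ellipsoid d ((- lstar) *\<^sub>R P)) (ellipsoid c0 P0)"
proof -
  define M where "M = matrix_inv L0"
  define ct where "ct = transpose L0 *v (c - c0)"
  define Pt where "Pt = M ** P ** transpose M"
  define a where "a = transpose V *v ct"
  define S where "S = supp_idx V ct"
  define lm where "lm = Min (range (\<lambda>i. lam$i))"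
  define I where "I = I_set Pt V lam ct"
  define g where "g = (\<lambda>\<beta>. \<beta> + (\<Sum>i\<in>S. (a$i)^2 * (lam$i*\<beta>/(lam$i*\<beta>-1))))"
  define Phi where "Phi = (\<lambda>x. transpose V *v (transpose L0 *v (x - c0)))"
  have P0: "P0 = L0 ** transpose L0" using assms(3) cholesky_factor_def by blast
  have LM: "L0 ** M = mat 1" "M ** L0 = mat 1" using L_inv[OF assms(2) P0] M_def by auto
  have TMTL: "transpose M ** transpose L0 = mat 1"
    by (metis LM(1) matrix_transpose_mul transpose_mat)
  have TLTM: "transpose L0 ** transpose M = mat 1"
    by (metis LM(2) matrix_transpose_mul transpose_mat)
  have Vo: "orthogonal_matrix V" and Pt_eq: "Pt = V ** diag_mat lam ** transpose V"
    using assms(4) by (auto simp: spectral_decomp_def Pt_def M_def)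
  have VtV: "transpose V ** V = mat 1" using Vo orthogonal_matrix_def by blast
  have Sdef: "S = {i. a$i \<noteq> 0}" by (simp add: S_def supp_idx_def a_def)
  have lamin: "lambda_min Pt = lm" unfolding lambda_min_def Pt_eq eig[OF Vo] lm_def ..
  have Idef: "I = (if \<exists>i\<in>S. lam$i = lm then {inverse lm<..} else {inverse lm..})"
    unfolding I_def I_set_def lamin S_def ..
  have ell_eq: "ell V lam ct \<beta> = - g \<beta>" for \<beta>
    unfolding ell_def g_def S_def a_def by simp
  have qP: "(transpose M *v w) \<bullet> (P *v (transpose M *v w)) = (\<Sum>i\<in>UNIV. lam$i * ((transpose V *v w)$i)^2)" for w
    by (rule quadP) (use Pt_eq Pt_def in simp)
  have qx: "(x-c) \<bullet> (P *v (x-c)) = (\<Sum>i\<in>UNIV. lam$i * ((Phi x)$i - a$i)^2)" for x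
  proof -
    have "x - c = transpose M *v (transpose L0 *v (x-c))"
      by (simp only: matrix_vector_mul_assoc TMTL matrix_vector_mul_lid)
    then have "(x-c) \<bullet> (P *v (x-c)) = (\<Sum>i\<in>UNIV. lam$i * ((transpose V *v (transpose L0 *v (x-c)))$i)^2)"
      using qP by metis
    also have "transpose V *v (transpose L0 *v (x-c)) = Phi x - a"
    proof -
      have "x - c = (x - c0) - (c - c0)" by simp
      then show ?thesis unfolding Phi_def a_def ct_def
        by (metis matrix_vector_mult_diff_distrib)
    qed
    finally show ?thesis by simp
  qed
  have rx: "(x-c0) \<bullet> (P0 *v (x-c0)) = (\<Sum>i\<in>UNIV. ((Phi x)$i)^2)" for x
    unfolding P0 Phi_def by (rule quadP0[OF Vo])
  have tl: "transpose L0 *v (transpose M *v w) = w" for w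
    by (simp only: matrix_vector_mul_assoc TLTM matrix_vector_mul_lid)
  have tv: "transpose V *v (V *v w) = w" for w
    by (simp only: matrix_vector_mul_assoc VtV matrix_vector_mul_lid)
  have PhiPsi: "Phi (c0 + transpose M *v (V *v z)) = z" for z
    unfolding Phi_def by (simp only: add_diff_cancel_left' tl tv)
  have lampos: "\<forall>i. lam$i > 0"
  proof
    fix i
    let ?e = "axis i (1::real) :: real^('n::{finite,linorder})"
    let ?v = "transpose M *v (V *v ?e)"
    have "transpose V *v (transpose L0 *v ?v) = ?e"
      by (simp only: tl tv)
    then have "?v \<noteq> 0" by (metis axis_eq_0_iff matrix_vector_mult_0_right zero_neq_one)
    then have "?v \<bullet> (P *v ?v) > 0" using assms(1) sym_posdef_def by blast
    also have "?v \<bullet> (P *v ?v) = (\<Sum>k\<in>UNIV. lam$k * (?e$k)^2)"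
      unfolding qP by (simp only: tv)
    also have "\<dots> = (\<Sum>k\<in>UNIV. if k = i then lam$i else 0)"
      by (rule sum.cong) (auto simp: axis_def)
    also have "\<dots> = lam$i" by simp
    finally show "lam$i > 0" .
  qed
  have weak: "(\<Sum>i\<in>UNIV. (z$i)^2) \<le> g \<beta>" if "\<beta> \<in> I" "(\<Sum>i\<in>UNIV. lam$i*(z$i-a$i)^2) \<le> 1" for \<beta> z
    unfolding g_def by (rule weak_dual[OF lampos lm_def Sdef Idef that])
  obtain \<beta>s zs where bsI: "\<beta>s \<in> I" and zc: "(\<Sum>i\<in>UNIV. lam$i*(zs$i-a$i)^2) = 1"
    and zg: "(\<Sum>i\<in>UNIV. (zs$i)^2) = g \<beta>s"
    using strong_dual[OF lampos lm_def Sdef Idef] unfolding g_def by blast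
  define m where "m = g \<beta>s"
  have mle: "m \<le> g \<beta>" if "\<beta> \<in> I" for \<beta>
    using weak[OF that, of zs] zc zg m_def by simp
  have mpos: "m > 0"
  proof -
    note ip = I_props[OF lampos lm_def Idef bsI]
    have "(\<Sum>i\<in>S. (a$i)^2 * (lam$i*\<beta>s/(lam$i*\<beta>s-1))) \<ge> 0"
    proof (rule sum_nonneg)
      fix i assume "i \<in> S"
      then have "lam$i*\<beta>s > 1" using ip(3) by blast
      then show "(a$i)^2 * (lam$i*\<beta>s/(lam$i*\<beta>s-1)) \<ge> 0" by simp
    qed
    moreover have "\<beta>s > 0" using ip(1,2) by (meson inverse_positive_iff_positive less_le_trans)
    ultimately show ?thesis unfolding m_def g_def by linarith
  qed
  have lstar: "Sup (ell V lam ct ` I) = - m"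
  proof (rule cSup_eq_maximum)
    show "- m \<in> ell V lam ct ` I" using bsI ell_eq m_def by force
  next
    fix y assume "y \<in> ell V lam ct ` I"
    then obtain \<beta> where "\<beta> \<in> I" "y = ell V lam ct \<beta>" by blast
    then show "y \<le> - m" using mle ell_eq by force
  qed
  define xs where "xs = c0 + transpose M *v (V *v zs)"
  have Phixs: "Phi xs = zs" unfolding xs_def by (rule PhiPsi)
  have qxs: "(xs-c) \<bullet> (P *v (xs-c)) = 1" using qx[of xs] Phixs zc by simp
  have rxs: "(xs-c0) \<bullet> (P0 *v (xs-c0)) = m" using rx[of xs] Phixs zg m_def by simp
  have sm: "(k *\<^sub>R A) *v v = k *\<^sub>R (A *v v)" for k and A :: "real^('n::{finite,linorder})^('n::{finite,linorder})" and v
    by (simp add: scaleR_matrix_vector_assoc)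
  have contain: "(x-c0) \<bullet> (P0 *v (x-c0)) \<le> m" if "(x-c) \<bullet> (P *v (x-c)) \<le> 1" for x
  proof -
    have "(\<Sum>i\<in>UNIV. lam$i*((Phi x)$i-a$i)^2) \<le> 1" using that qx by simp
    then have "(\<Sum>i\<in>UNIV. ((Phi x)$i)^2) \<le> g \<beta>s" by (rule weak[OF bsI])
    then show ?thesis using rx m_def by simp
  qed
  have part1: "inscribed (ellipsoid c P) (ellipsoid c0 (inverse m *\<^sub>R P0))"
    unfolding inscribed_def
  proof
    show "ellipsoid c P \<subseteq> ellipsoid c0 (inverse m *\<^sub>R P0)"
    proof
      fix x assume "x \<in> ellipsoid c P"
      then have "(x-c0) \<bullet> (P0 *v (x-c0)) \<le> m" using contain by (simp add: ellipsoid_def)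
      then have "inverse m * ((x-c0) \<bullet> (P0 *v (x-c0))) \<le> 1" using mpos by (simp add: field_simps)
      then show "x \<in> ellipsoid c0 (inverse m *\<^sub>R P0)" by (simp add: ellipsoid_def sm)
    qed
  next
    have "xs \<in> frontier (ellipsoid c P)" by (rule frontier_pt[OF qxs])
    moreover have "xs \<in> frontier (ellipsoid c0 (inverse m *\<^sub>R P0))"
      by (rule frontier_pt) (use mpos in \<open>simp add: sm rxs\<close>)
    ultimately show "frontier (ellipsoid c P) \<inter> frontier (ellipsoid c0 (inverse m *\<^sub>R P0)) \<noteq> {}" by blast
  qed
  define s where "s = m powr (-1/2)"
  have spos: "s > 0" using mpos by (simp add: s_def)
  have ss: "s^2 = inverse m"
  proof -
    have "s^2 = m powr (-1/2 + -1/2)" by (simp only: s_def power2_eq_square powr_add)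
    also have "(-1/2 + -1/2) = (-1::real)" by simp
    also have "m powr -1 = 1/m" by (rule powr_neg_one[OF mpos])
    finally show ?thesis by (simp only: inverse_eq_divide)
  qed
  have ms: "m * s^2 = 1" unfolding ss using mpos by simp
  have is2: "(inverse s)^2 = m"
  proof -
    have "(inverse s)^2 = inverse (s^2)" by (rule power_inverse)
    also have "\<dots> = m" unfolding ss by simp
    finally show ?thesis .
  qed
  define d where "d = s *\<^sub>R (c - c0) + c0"
  have part2: "inscribed (ellipsoid d (m *\<^sub>R P)) (ellipsoid c0 P0)"
    unfolding inscribed_def
  proof
    show "ellipsoid d (m *\<^sub>R P) \<subseteq> ellipsoid c0 P0"
    proof
      fix x' assume x': "x' \<in> ellipsoid d (m *\<^sub>R P)"
      define x where "x = c0 + inverse s *\<^sub>R (x' - c0)"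
      have xc: "x - c = inverse s *\<^sub>R (x' - d)" using spos
        by (simp add: x_def d_def algebra_simps)
      have "(x-c) \<bullet> (P *v (x-c)) = m * ((x' - d) \<bullet> (P *v (x' - d)))"
        unfolding xc quad_scale is2 ..
      also have "\<dots> \<le> 1" using x' by (simp add: ellipsoid_def sm)
      finally have r: "(x-c0) \<bullet> (P0 *v (x-c0)) \<le> m" by (rule contain)
      have "x' - c0 = s *\<^sub>R (x - c0)" using spos by (simp add: x_def)
      then have "(x'-c0) \<bullet> (P0 *v (x'-c0)) = s^2 * ((x-c0) \<bullet> (P0 *v (x-c0)))"
        by (simp only: quad_scale)
      also have "\<dots> \<le> s^2 * m" using r by (simp add: mult_left_mono)
      also have "\<dots> = 1" using ms by (simp add: mult.commute)
      finally show "x' \<in> ellipsoid c0 P0" by (simp add: ellipsoid_def)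
    qed
  next
    define xs' where "xs' = c0 + s *\<^sub>R (xs - c0)"
    have "xs' - d = s *\<^sub>R (xs - c)" by (simp add: xs'_def d_def algebra_simps)
    then have "(xs' - d) \<bullet> ((m *\<^sub>R P) *v (xs' - d)) = m * (s^2 * 1)"
      by (simp only: sm inner_scaleR_right quad_scale qxs)
    then have "xs' \<in> frontier (ellipsoid d (m *\<^sub>R P))" using ms by (intro frontier_pt) simp
    moreover have "xs' - c0 = s *\<^sub>R (xs - c0)" by (simp add: xs'_def)
    then have "(xs' - c0) \<bullet> (P0 *v (xs' - c0)) = s^2 * m" by (simp only: quad_scale rxs)
    then have "xs' \<in> frontier (ellipsoid c0 P0)" using ms by (intro frontier_pt) (simp add: mult.commute)
    ultimately show "frontier (ellipsoid d (m *\<^sub>R P)) \<inter> frontier (ellipsoid c0 P0) \<noteq> {}" by blast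
  qed
  have lstar': "Sup (ell V lam (transpose L0 *v (c - c0)) ` I_set (matrix_inv L0 ** P ** transpose (matrix_inv L0)) V lam (transpose L0 *v (c - c0))) = - m"
    using lstar unfolding I_def Pt_def M_def ct_def .
  show ?thesis unfolding Let_def lstar' using part1 part2 unfolding d_def s_def by simp
qed

end
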